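(* Let $d<\infty$, let $V\subset\mathbb{B}_d$ be an analytic disc attached to the unit sphere and $f$ its embedding map. Suppose $f(\xi)=f(\zeta)$ for two distinct $\xi,\zeta\in\mathbb{T}$. If $\varphi\in\mathcal{M}_f$ extends continuously to $\overline{\mathbb{D}}$, then $\varphi(\xi)=\varphi(\zeta)$.
   Context: $\mathbb{D}$ is the open unit disc, $\mathbb{T}$ the unit circle, $\mathbb{B}_d$ the open unit ball of $\mathbb{C}^d$. The Drury–Arveson space $H^2_d$ is the RKHS on $\mathbb{B}_d$ with kernel $1/(1-\langle z,w\rangle)$, with multiplier algebra $\mathcal{M}_d$. A variety is a common zero set in $\mathbb{B}_d$ of a family of functions from $\mathcal{M}_d$. An analytic disc attached to the unit sphere is a variety $V\subset\mathbb{B}_d$ ($d<\infty$) for which there is an injective analytic $f:\mathbb{D}\to\mathbb{B}_d$ with $f'(z)\neq0$ on $\mathbb{D}$, $V=f(\mathbb{D})$, $f$ extends to a $C^2$ map on $\overline{\mathbb{D}}$, and for $x\in\overline{\mathbb{D}}$, $\|f(x)\|=1$ iff $|x|=1$ ($f$ is the embedding map). $\mathcal{H}_f$ is the RKHS on $\mathbb{D}$ with kernel $k^f(z,w)=1/(1-\langle f(z),f(w)\rangle)$ and $\mathcal{M}_f$ its multiplier algebra. *)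

theory Defs
  imports "HOL-Analysis.Analysis"
begin

definition cinner :: "complex^'n \<Rightarrow> complex^'n \<Rightarrow> complex" where
  "cinner z w = (\<Sum>i\<in>UNIV. z $ i * cnj (w $ i))"

text \<open>The reproducing kernel Hilbert space of a (positive) kernel k on a set X,
  described as a set of functions: g belongs to H(k) iff the functional
  sum a_i k_{x_i} |-> sum a_i g(x_i) is bounded on the span of kernel functions
  (Aronszajn / Moore; cf. Paulsen--Raghupathi, Thm. 3.11).\<close>
definition rkhs :: "'a set \<Rightarrow> ('a \<Rightarrow> 'a \<Rightarrow> complex) \<Rightarrow> ('a \<Rightarrow> complex) set" where
  "rkhs X k = {g. \<exists>C::real. \<forall>(n::nat) (x::nat \<Rightarrow> 'a) (a::nat \<Rightarrow> complex).
      (\<forall>i<n. x i \<in> X) \<longrightarrow>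
      (cmod (\<Sum>i<n. a i * g (x i)))\<^sup>2
        \<le> C * Re (\<Sum>i<n. \<Sum>j<n. cnj (a i) * a j * k (x j) (x i))}"

definition multipliers :: "'a set \<Rightarrow> ('a \<Rightarrow> 'a \<Rightarrow> complex) \<Rightarrow> ('a \<Rightarrow> complex) set" where
  "multipliers X k = {\<phi>. \<forall>g\<in>rkhs X k. (\<lambda>x. \<phi> x * g x) \<in> rkhs X k}"

definition DA_kernel :: "complex^'n \<Rightarrow> complex^'n \<Rightarrow> complex" where
  "DA_kernel z w = 1 / (1 - cinner z w)"

definition DA_multipliers :: "(complex^'n \<Rightarrow> complex) set" where
  "DA_multipliers = multipliers (ball 0 1) DA_kernel"

definition DA_variety :: "(complex^'n) set \<Rightarrow> bool" where
  "DA_variety V \<longleftrightarrow> (\<exists>F \<subseteq> DA_multipliers. V = {z \<in> ball 0 1. \<forall>h\<in>F. h z = 0})"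

definition C2_on_closed_disc :: "(complex \<Rightarrow> complex^'n) \<Rightarrow> bool" where
  "C2_on_closed_disc f \<longleftrightarrow>
     (\<exists>(Df :: complex \<Rightarrow> (complex \<Rightarrow>\<^sub>L (complex^'n)))
        (D2f :: complex \<Rightarrow> (complex \<Rightarrow>\<^sub>L (complex \<Rightarrow>\<^sub>L (complex^'n)))).
        (\<forall>x\<in>cball 0 1. (f has_derivative blinfun_apply (Df x)) (at x within cball 0 1)) \<and>
        (\<forall>x\<in>cball 0 1. (Df has_derivative blinfun_apply (D2f x)) (at x within cball 0 1)) \<and>
        continuous_on (cball 0 1) D2f)"

text \<open>V is an analytic disc attached to the unit sphere with embedding map f
  (f is given together with its extension to the closed disc).\<close>
definition analytic_disc_attached ::
    "(complex^'n) set \<Rightarrow> (complex \<Rightarrow> complex^'n) \<Rightarrow> bool" where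
  "analytic_disc_attached V f \<longleftrightarrow>
     DA_variety V \<and>
     f ` ball 0 1 \<subseteq> ball 0 1 \<and>
     inj_on f (ball 0 1) \<and>
     (\<forall>i. (\<lambda>z. f z $ i) holomorphic_on ball 0 1) \<and>
     (\<forall>z\<in>ball 0 1. \<exists>i. deriv (\<lambda>w. f w $ i) z \<noteq> 0) \<and>
     V = f ` ball 0 1 \<and>
     C2_on_closed_disc f \<and>
     (\<forall>x\<in>cball 0 1. norm (f x) = 1 \<longleftrightarrow> cmod x = 1)"

definition kf :: "(complex \<Rightarrow> complex^'n) \<Rightarrow> complex \<Rightarrow> complex \<Rightarrow> complex" where
  "kf f z w = 1 / (1 - cinner (f z) (f w))"

definition Mf :: "(complex \<Rightarrow> complex^'n) \<Rightarrow> (complex \<Rightarrow> complex) set" where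
  "Mf f = multipliers (ball 0 1) (kf f)"

end

theory Submission
  imports Defs "HOL-Complex_Analysis.Complex_Analysis"
begin
lemma norm_vec_sq: "(norm (x::complex^'n))^2 = (\<Sum>i\<in>UNIV. (cmod (x$i))^2)"
  unfolding norm_vec_def L2_set_def by (simp add: sum_nonneg)

lemma cinner_self: "cinner x x = of_real ((norm x)^2)"
  unfolding cinner_def norm_vec_sq of_real_sum
  by (rule sum.cong) (simp_all add: complex_norm_square[symmetric])

lemma cinner_cnj: "cnj (cinner x y) = cinner y x"
  unfolding cinner_def by (simp add: mult.commute)

lemma cinner_add_left: "cinner (x + y) z = cinner x z + cinner y z"
  unfolding cinner_def by (simp add: distrib_right sum.distrib)
lemma cinner_add_right: "cinner z (x + y) = cinner z x + cinner z y"
  unfolding cinner_def by (simp add: distrib_left sum.distrib)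
lemma cinner_diff_left: "cinner (x - y) z = cinner x z - cinner y z"
  unfolding cinner_def by (simp add: left_diff_distrib sum_subtractf)
lemma cinner_diff_right: "cinner z (x - y) = cinner z x - cinner z y"
  unfolding cinner_def by (simp add: right_diff_distrib sum_subtractf)

lemma complex_CS_sum:
  fixes p B :: "'a \<Rightarrow> complex"
  assumes "finite A"
  shows "(cmod (\<Sum>k\<in>A. p k * B k))^2 \<le> (\<Sum>k\<in>A. (cmod (p k))^2) * (\<Sum>k\<in>A. (cmod (B k))^2)"
proof -
  have "cmod (\<Sum>k\<in>A. p k * B k) \<le> (\<Sum>k\<in>A. \<bar>cmod (p k)\<bar> * \<bar>cmod (B k)\<bar>)"
    by (rule order_trans[OF norm_sum]) (simp add: norm_mult)
  also have "\<dots> \<le> L2_set (\<lambda>k. cmod (p k)) A * L2_set (\<lambda>k. cmod (B k)) A"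
    by (rule L2_set_mult_ineq)
  finally have 1: "cmod (\<Sum>k\<in>A. p k * B k) \<le> L2_set (\<lambda>k. cmod (p k)) A * L2_set (\<lambda>k. cmod (B k)) A" .
  have "(cmod (\<Sum>k\<in>A. p k * B k))^2 \<le> (L2_set (\<lambda>k. cmod (p k)) A * L2_set (\<lambda>k. cmod (B k)) A)^2"
    using 1 by (simp add: power_mono)
  also have "\<dots> = (\<Sum>k\<in>A. (cmod (p k))^2) * (\<Sum>k\<in>A. (cmod (B k))^2)"
    unfolding power_mult_distrib L2_set_def by (simp add: sum_nonneg)
  finally show ?thesis .
qed

lemma cinner_CS: "cmod (cinner x y) \<le> norm x * norm y"
proof -
  have "(cmod (cinner x y))^2 \<le> (\<Sum>k\<in>UNIV. (cmod (x$k))^2) * (\<Sum>k\<in>UNIV. (cmod (cnj (y$k)))^2)"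
    unfolding cinner_def by (rule complex_CS_sum) simp
  also have "\<dots> = (norm x * norm y)^2" by (simp add: norm_vec_sq power_mult_distrib)
  finally show ?thesis
    by (meson mult_nonneg_nonneg norm_ge_zero power2_le_imp_le)
qed

lemma rkhs_two_point:
  assumes "h \<in> rkhs X k"
  obtains C where "\<And>z w t. z \<in> X \<Longrightarrow> w \<in> X \<Longrightarrow> (cmod (h z - t * h w))^2 \<le> C * Re (k z z - t * k w z - cnj t * k z w + cnj t * t * k w w)"
proof -
  obtain C where C: "\<forall>(n::nat) (x::nat \<Rightarrow> _) (a::nat \<Rightarrow> complex).
      (\<forall>i<n. x i \<in> X) \<longrightarrow>
      (cmod (\<Sum>i<n. a i * h (x i)))\<^sup>2
        \<le> C * Re (\<Sum>i<n. \<Sum>j<n. cnj (a i) * a j * k (x j) (x i))"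
    using assms(1) unfolding rkhs_def by blast
  show ?thesis
  proof (rule that)
    fix z w t assume assms: "z \<in> X" "w \<in> X"
    define x where "x = (\<lambda>i::nat. if i = 0 then z else w)"
    define a where "a = (\<lambda>i::nat. if i = 0 then (1::complex) else - t)"
    have "\<forall>i<2. x i \<in> X" using assms unfolding x_def by auto
    with C have "(cmod (\<Sum>i<2. a i * h (x i)))\<^sup>2
        \<le> C * Re (\<Sum>i<2. \<Sum>j<2. cnj (a i) * a j * k (x j) (x i))" by blast
    also have "(\<Sum>i<2. a i * h (x i)) = h z - t * h w"
      by (simp add: numeral_2_eq_2 a_def x_def)
    also have "(\<Sum>i<2. \<Sum>j<2. cnj (a i) * a j * k (x j) (x i)) = k z z - t * k w z - cnj t * k z w + cnj t * t * k w w"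
      by (simp add: numeral_2_eq_2 a_def x_def)
    finally show "(cmod (h z - t * h w))^2 \<le> C * Re (k z z - t * k w z - cnj t * k z w + cnj t * t * k w w)" .
  qed
qed

lemma kernel_power_CS:
  fixes y :: "nat \<Rightarrow> complex^'n" and p :: "complex^'n"
  assumes p: "norm p = 1"
  shows "(cmod (\<Sum>i<n. a i * cinner (y i) p ^ m))^2
         \<le> Re (\<Sum>i<n. \<Sum>j<n. cnj (a i) * a j * cinner (y j) (y i) ^ m)"
proof (induction m arbitrary: a)
  case 0
  have "(\<Sum>i<n. \<Sum>j<n. cnj (a i) * a j) = cnj (\<Sum>i<n. a i) * (\<Sum>i<n. a i)"
    by (simp add: sum_product)
  also have "\<dots> = of_real ((cmod (\<Sum>i<n. a i))^2)"
    using complex_norm_square[of "\<Sum>i<n. a i"] by (simp add: mult.commute)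
  finally show ?case by simp
next
  case (Suc m)
  define u where "u i = cinner (y i) p" for i
  define B where "B k = (\<Sum>i<n. a i * y i $ k * u i ^ m)" for k
  have "(\<Sum>i<n. a i * u i ^ Suc m) = (\<Sum>i<n. \<Sum>k\<in>UNIV. cnj (p $ k) * (a i * y i $ k * u i ^ m))"
    unfolding u_def cinner_def power_Suc
    by (rule sum.cong) (auto simp: sum_distrib_left sum_distrib_right intro!: sum.cong)
  also have "\<dots> = (\<Sum>k\<in>UNIV. cnj (p $ k) * B k)"
    unfolding B_def by (subst sum.swap) (simp add: sum_distrib_left)
  finally have eq1: "(\<Sum>i<n. a i * u i ^ Suc m) = (\<Sum>k\<in>UNIV. cnj (p $ k) * B k)" .
  have "(cmod (\<Sum>k\<in>UNIV. cnj (p $ k) * B k))^2 \<le> (\<Sum>k\<in>UNIV. (cmod (cnj (p $ k)))^2) * (\<Sum>k\<in>UNIV. (cmod (B k))^2)"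
    by (rule complex_CS_sum) simp
  also have "(\<Sum>k\<in>UNIV. (cmod (cnj (p $ k)))^2) = 1"
    using p by (simp add: norm_vec_sq[symmetric])
  finally have 1: "(cmod (\<Sum>i<n. a i * u i ^ Suc m))^2 \<le> (\<Sum>k\<in>UNIV. (cmod (B k))^2)"
    using eq1 by simp
  have 2: "(cmod (B k))^2 \<le> Re (\<Sum>i<n. \<Sum>j<n. cnj (a i * y i $ k) * (a j * y j $ k) * cinner (y j) (y i) ^ m)" for k
    using Suc.IH[of "\<lambda>i. a i * y i $ k"] unfolding B_def u_def by (simp add: mult.assoc)
  have "(\<Sum>k\<in>UNIV. (cmod (B k))^2) \<le> (\<Sum>k\<in>UNIV. Re (\<Sum>i<n. \<Sum>j<n. cnj (a i * y i $ k) * (a j * y j $ k) * cinner (y j) (y i) ^ m))"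
    by (rule sum_mono) (rule 2)
  also have "\<dots> = Re (\<Sum>k\<in>UNIV. \<Sum>i<n. \<Sum>j<n. cnj (a i * y i $ k) * (a j * y j $ k) * cinner (y j) (y i) ^ m)"
    by simp
  also have "(\<Sum>k\<in>UNIV. \<Sum>i<n. \<Sum>j<n. cnj (a i * y i $ k) * (a j * y j $ k) * cinner (y j) (y i) ^ m)
      = (\<Sum>i<n. \<Sum>j<n. cnj (a i) * a j * cinner (y j) (y i) ^ Suc m)"
  proof -
    have "(\<Sum>k\<in>UNIV. \<Sum>i<n. \<Sum>j<n. cnj (a i * y i $ k) * (a j * y j $ k) * cinner (y j) (y i) ^ m)
       = (\<Sum>i<n. \<Sum>j<n. \<Sum>k\<in>UNIV. cnj (a i * y i $ k) * (a j * y j $ k) * cinner (y j) (y i) ^ m)"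
      by (subst sum.swap) (rule sum.cong, simp, subst sum.swap, simp)
    also have "\<dots> = (\<Sum>i<n. \<Sum>j<n. cnj (a i) * a j * cinner (y j) (y i) ^ Suc m)"
      unfolding cinner_def power_Suc
      by (intro sum.cong refl) (simp add: sum_distrib_left sum_distrib_right mult_ac)
    finally show ?thesis .
  qed
  finally show ?case using 1 unfolding u_def by simp
qed

lemma log_in_rkhs:
  fixes f :: "complex \<Rightarrow> complex^'n" and p :: "complex^'n"
  assumes fb: "\<forall>z\<in>ball 0 1. norm (f z) < 1" and p: "norm p = 1"
  shows "(\<lambda>z. - Ln (1 - cinner (f z) p)) \<in> rkhs (ball 0 1) (kf f)"
proof -
  define Z where "Z = suminf (\<lambda>m::nat. inverse (of_nat m ^ 2 :: real))"
  have sZ: "summable (\<lambda>m::nat. inverse (of_nat m ^ 2 :: real))"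
    by (rule inverse_power_summable) simp
  show ?thesis unfolding rkhs_def
  proof (intro CollectI exI[of _ Z] allI impI)
    fix n :: nat and x :: "nat \<Rightarrow> complex" and a :: "nat \<Rightarrow> complex"
    assume x: "\<forall>i<n. x i \<in> ball 0 1"
    define y where "y i = f (x i)" for i
    define u where "u i = cinner (y i) p" for i
    define S where "S m = (\<Sum>i<n. \<Sum>j<n. cnj (a i) * a j * cinner (y j) (y i) ^ m)" for m
    define T where "T = (\<Sum>i<n. \<Sum>j<n. cnj (a i) * a j * kf f (x j) (x i))"
    define A where "A m = (\<Sum>i<n. a i * u i ^ m)" for m
    have yb: "norm (y i) < 1" if "i < n" for i using x fb that unfolding y_def by auto
    have ub: "cmod (u i) < 1" if "i < n" for i
    proof -
      have "cmod (u i) \<le> norm (y i) * norm p" unfolding u_def by (rule cinner_CS)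
      then show ?thesis using yb[OF that] p by simp
    qed
    have cb: "cmod (cinner (y j) (y i)) < 1" if "i < n" "j < n" for i j
    proof -
      have "cmod (cinner (y j) (y i)) \<le> norm (y j) * norm (y i)" by (rule cinner_CS)
      also have "\<dots> < 1" using yb[OF that(1)] yb[OF that(2)]
        by (metis le_less_trans mult_left_le norm_ge_zero order_less_imp_le)
      finally show ?thesis .
    qed
    have ST: "S sums T"
      unfolding S_def T_def
    proof (intro sums_sum)
      fix i j assume "i \<in> {..<n}" "j \<in> {..<n}"
      then have "(\<lambda>m. cinner (y j) (y i) ^ m) sums (1 / (1 - cinner (y j) (y i)))"
        using cb by (intro geometric_sums) auto
      then show "(\<lambda>m. cnj (a i) * a j * cinner (y j) (y i) ^ m) sums (cnj (a i) * a j * kf f (x j) (x i))"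
        unfolding kf_def y_def by (rule sums_mult)
    qed
    have AS: "(cmod (A m))^2 \<le> Re (S m)" for m
      unfolding A_def S_def u_def by (rule kernel_power_CS[OF p])
    have ReS: "(\<lambda>m. Re (S m)) sums Re T" using ST by (rule sums_Re)
    have G: "(\<lambda>m. A m / of_nat m) sums (\<Sum>i<n. a i * - Ln (1 - cinner (f (x i)) p))"
      unfolding A_def sum_divide_distrib
    proof (intro sums_sum)
      fix i assume "i \<in> {..<n}"
      then have "(\<lambda>m. - ((- (- u i))^m) / of_nat m) sums ln (1 + - u i)"
        using ub by (intro Ln_series') auto
      then have "(\<lambda>m. u i ^ m / of_nat m) sums (- Ln (1 - u i))"
        using sums_minus by fastforce
      then show "(\<lambda>m. a i * u i ^ m / of_nat m) sums (a i * - Ln (1 - cinner (f (x i)) p))"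
        unfolding u_def y_def using sums_mult by (fastforce simp: mult.assoc)
    qed
    have bound: "(cmod (\<Sum>m<N. A m / of_nat m))^2 \<le> Z * Re T" for N
    proof -
      have c1: "(cmod (\<Sum>m<N. inverse (of_nat m) * A m))^2
          \<le> (\<Sum>m<N. (cmod (inverse (of_nat m :: complex)))^2) * (\<Sum>m<N. (cmod (A m))^2)"
        by (rule complex_CS_sum) simp
      have c2: "(\<Sum>m<N. (cmod (inverse (of_nat m :: complex)))^2) \<le> Z"
        unfolding Z_def
        by (rule order_trans[OF _ sum_le_suminf[OF sZ, of "{..<N}"]])
           (auto simp: norm_inverse power_inverse)
      have c3: "(\<Sum>m<N. (cmod (A m))^2) \<le> (\<Sum>m<N. Re (S m))"
        by (rule sum_mono) (rule AS)
      have c4: "(\<Sum>m<N. Re (S m)) \<le> Re T"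
        using sum_le_suminf[OF sums_summable[OF ReS], of "{..<N}"] sums_unique[OF ReS]
          order_trans[OF zero_le_power2 AS] by auto
      have Z0: "0 \<le> Z" unfolding Z_def by (rule suminf_nonneg[OF sZ]) simp
      have "(\<Sum>m<N. (cmod (inverse (of_nat m :: complex)))^2) * (\<Sum>m<N. (cmod (A m))^2) \<le> Z * Re T"
        by (rule mult_mono) (use c2 c3 c4 Z0 in \<open>auto intro: sum_nonneg\<close>)
      with c1 have "(cmod (\<Sum>m<N. inverse (of_nat m) * A m))^2 \<le> Z * Re T" by linarith
      then show ?thesis by (simp add: divide_inverse mult.commute)
    qed
    have "(\<lambda>N. (cmod (\<Sum>m<N. A m / of_nat m))^2) \<longlonglongrightarrow> (cmod (\<Sum>i<n. a i * - Ln (1 - cinner (f (x i)) p)))^2"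
      using G unfolding sums_def by (intro tendsto_intros)
    then show "(cmod (\<Sum>i<n. a i * - Ln (1 - cinner (f (x i)) p)))\<^sup>2
         \<le> Z * Re (\<Sum>i<n. \<Sum>j<n. cnj (a i) * a j * kf f (x j) (x i))"
      unfolding T_def[symmetric] by (rule LIMSEQ_le_const2) (use bound in auto)
  qed
qed

lemma C2_facts:
  fixes f :: "complex \<Rightarrow> complex^'n"
  assumes "C2_on_closed_disc f"
  obtains Df :: "complex \<Rightarrow> (complex \<Rightarrow>\<^sub>L (complex^'n))" and M :: real where
   "\<forall>x\<in>cball 0 1. (f has_derivative blinfun_apply (Df x)) (at x within cball 0 1)"
   "continuous_on (cball 0 1) Df"
   "0 \<le> M"
   "\<forall>x\<in>cball 0 1. \<forall>y\<in>cball 0 1. norm (f y - f x - Df x (y - x)) \<le> M * (norm (y - x))^2"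
proof -
  obtain Df :: "complex \<Rightarrow> (complex \<Rightarrow>\<^sub>L (complex^'n))"
     and D2f :: "complex \<Rightarrow> (complex \<Rightarrow>\<^sub>L (complex \<Rightarrow>\<^sub>L (complex^'n)))"
    where d1: "\<forall>x\<in>cball 0 1. (f has_derivative blinfun_apply (Df x)) (at x within cball 0 1)"
      and d2: "\<forall>x\<in>cball 0 1. (Df has_derivative blinfun_apply (D2f x)) (at x within cball 0 1)"
      and c2: "continuous_on (cball 0 1) D2f"
    using assms unfolding C2_on_closed_disc_def by blast
  have cDf: "continuous_on (cball 0 1) Df"
    unfolding continuous_on_eq_continuous_within
    using d2 has_derivative_continuous by blast
  have "compact (D2f ` cball 0 1)" by (rule compact_continuous_image[OF c2]) simp
  then obtain B where B: "B > 0" "\<forall>y\<in>D2f ` cball 0 1. norm y \<le> B"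
    using compact_imp_bounded bounded_pos by metis
  have lip: "norm (Df x - Df y) \<le> B * norm (x - y)" if "x \<in> cball 0 1" "y \<in> cball 0 1" for x y
    by (rule differentiable_bound[of "cball 0 1" Df "\<lambda>x. blinfun_apply (D2f x)" B])
       (use d2 B that in \<open>auto simp: norm_blinfun.rep_eq[symmetric]\<close>)
  have tay: "norm (f y - f x - Df x (y - x)) \<le> B * (norm (y - x))^2"
    if x: "x \<in> cball 0 1" and y: "y \<in> cball 0 1" for x y
  proof -
    have seg: "closed_segment x y \<subseteq> cball 0 1"
      by (rule closed_segment_subset[OF x y convex_cball])
    have "norm (f y - f x - Df x (y - x)) \<le> norm (y - x) * (B * norm (y - x))"
    proof (rule differentiable_bound_linearization[of x y "closed_segment x y" f "\<lambda>z. blinfun_apply (Df z)" x])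
      show "x + t *\<^sub>R (y - x) \<in> closed_segment x y" if "t \<in> {0..1}" for t
        using that unfolding closed_segment_def
        by (intro CollectI exI[of _ t]) (auto simp: algebra_simps)
      show "(f has_derivative blinfun_apply (Df z)) (at z within closed_segment x y)"
        if "z \<in> closed_segment x y" for z
        using d1 seg that by (meson has_derivative_subset subsetD)
      show "onorm (blinfun_apply (Df z) - blinfun_apply (Df x)) \<le> B * norm (y - x)"
        if z: "z \<in> closed_segment x y" for z
      proof -
        have "blinfun_apply (Df z) - blinfun_apply (Df x) = blinfun_apply (Df z - Df x)"
          by (auto simp: fun_eq_iff blinfun.diff_left)
        then have "onorm (blinfun_apply (Df z) - blinfun_apply (Df x)) = norm (Df z - Df x)"
          by (simp add: norm_blinfun.rep_eq)
        also have "\<dots> \<le> B * norm (z - x)" using lip seg z x by auto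
        also have "\<dots> \<le> B * norm (y - x)"
          using segment_bound(1)[OF z] B by (intro mult_left_mono) auto
        finally show ?thesis .
      qed
    qed auto
    then show ?thesis by (simp add: power2_eq_square mult_ac)
  qed
  show ?thesis
    by (rule that[OF d1 cDf, of B]) (use B tay in auto)
qed

lemma Df_complex_linear:
  fixes f :: "complex \<Rightarrow> complex^'n" and Df :: "complex \<Rightarrow> (complex \<Rightarrow>\<^sub>L (complex^'n))"
  assumes hol: "\<forall>i. (\<lambda>z. f z $ i) holomorphic_on ball 0 1"
    and d1: "\<forall>x\<in>cball 0 1. (f has_derivative blinfun_apply (Df x)) (at x within cball 0 1)"
    and cDf: "continuous_on (cball 0 1) Df"
    and x: "x \<in> cball 0 1"
  shows "Df x (c * h) $ j = c * (Df x h $ j)"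
proof -
  have int: "Df x (c * h) $ j - c * (Df x h $ j) = 0" if xb: "x \<in> ball 0 1" for x
  proof -
    have "(f has_derivative blinfun_apply (Df x)) (at x)"
    proof -
      have "x \<in> cball 0 1" using xb by auto
      then have "(f has_derivative blinfun_apply (Df x)) (at x within cball 0 1)" using d1 by blast
      moreover have "at x within cball 0 1 = at x" using xb by (intro at_within_interior) simp
      ultimately show ?thesis by simp
    qed
    then have a: "((\<lambda>z. f z $ j) has_derivative (\<lambda>h. Df x h $ j)) (at x)"
      by (rule bounded_linear.has_derivative[OF bounded_linear_vec_nth])
    have "(\<lambda>z. f z $ j) field_differentiable at x"
      using hol xb by (meson holomorphic_on_imp_differentiable_at open_ball)
    then have "((\<lambda>z. f z $ j) has_field_derivative deriv (\<lambda>z. f z $ j) x) (at x)"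
      by (simp add: DERIV_deriv_iff_field_differentiable)
    then have b: "((\<lambda>z. f z $ j) has_derivative (\<lambda>h. deriv (\<lambda>z. f z $ j) x * h)) (at x)"
      by (simp add: has_field_derivative_def)
    have "(\<lambda>h. Df x h $ j) = (\<lambda>h. deriv (\<lambda>z. f z $ j) x * h)"
      by (rule has_derivative_unique[OF a b])
    then show ?thesis by (metis mult.left_commute right_minus_eq)
  qed
  have cont: "continuous_on (closure (ball 0 1)) (\<lambda>x. Df x (c * h) $ j - c * (Df x h $ j))"
    using cDf by (auto intro!: continuous_intros)
  show ?thesis
    using continuous_constant_on_closure[OF cont int] x by simp
qed

lemma moebius_identity:
  fixes a b :: complex
  shows "(cmod (1 - cnj a * b))^2 - (cmod (b - a))^2 = (1 - (cmod a)^2) * (1 - (cmod b)^2)"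
  unfolding cmod_power2 by (simp add: power2_eq_square algebra_simps)

lemma schwarz_pick_lower:
  assumes hol: "u holomorphic_on ball 0 1" and ub: "\<forall>z\<in>ball 0 1. cmod (u z) < 1"
  shows "\<exists>c>0. \<forall>z\<in>ball 0 1. c * (1 - (cmod z)^2) \<le> 1 - (cmod (u z))^2"
proof -
  define a where "a = u 0"
  have a1: "cmod a < 1" using ub unfolding a_def by auto
  have den: "1 - cnj a * u z \<noteq> 0" if "z \<in> ball 0 1" for z
  proof
    assume "1 - cnj a * u z = 0"
    then have "cmod (cnj a * u z) = 1" by (metis eq_iff_diff_eq_0 norm_one)
    moreover have "cmod (cnj a * u z) < 1"
    proof -
      have "cmod (u z) < 1" using ub that by blast
      then have "cmod a * cmod (u z) < 1" using a1
        by (metis mult_le_one norm_ge_zero less_le_not_le le_less_trans mult_left_le)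
      then show ?thesis by (simp add: norm_mult)
    qed
    ultimately show False by simp
  qed
  define v where "v z = (u z - a) / (1 - cnj a * u z)" for z
  have hv: "v holomorphic_on ball 0 1"
    unfolding v_def using den by (intro holomorphic_intros hol) auto
  have v0: "v 0 = 0" unfolding v_def a_def by simp
  have iden: "1 - (cmod (v z))^2 = (1 - (cmod a)^2) * (1 - (cmod (u z))^2) / (cmod (1 - cnj a * u z))^2"
    if "z \<in> ball 0 1" for z
  proof -
    have d: "(cmod (1 - cnj a * u z))^2 > 0" using den[OF that] by simp
    have "(cmod (v z))^2 = (cmod (u z - a))^2 / (cmod (1 - cnj a * u z))^2"
      unfolding v_def by (simp add: norm_divide power_divide)
    then show ?thesis using d moebius_identity[of a "u z"] by (simp add: field_simps)
  qed
  have vb: "cmod (v z) < 1" if "cmod z < 1" for z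
  proof -
    have zb: "z \<in> ball 0 1" using that by simp
    have "(1 - (cmod a)^2) * (1 - (cmod (u z))^2) / (cmod (1 - cnj a * u z))^2 > 0"
      using a1 ub zb den[OF zb] by (intro divide_pos_pos mult_pos_pos) (auto simp: abs_square_less_1)
    then have "(cmod (v z))^2 < 1" using iden[OF zb] by simp
    then show ?thesis by (simp add: abs_square_less_1)
  qed
  have sch: "cmod (v z) \<le> cmod z" if "cmod z < 1" for z
    using Schwarz_Lemma(1)[OF hv v0 vb that] .
  define c where "c = (1 - cmod a) / (1 + cmod a)"
  have c0: "c > 0" unfolding c_def using a1 norm_ge_zero[of a] by (intro divide_pos_pos) linarith+
  show ?thesis
  proof (intro exI[of _ c] conjI c0 ballI)
    fix z :: complex assume zb: "z \<in> ball 0 1"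
    have nz: "cmod z < 1" using zb by simp
    have ge: "cmod (1 - cnj a * u z) \<ge> 1 - cmod a"
    proof -
      have "cmod (u z) \<le> 1" using ub zb by (simp add: less_imp_le)
      then have "cmod (cnj a * u z) \<le> cmod a" by (simp add: norm_mult mult_left_le)
      then show ?thesis using norm_triangle_ineq2[of 1 "cnj a * u z"] by simp
    qed
    have pa: "1 - (cmod a)^2 > 0" using a1 by (simp add: abs_square_less_1)
    have "1 - (cmod (u z))^2 = (cmod (1 - cnj a * u z))^2 * (1 - (cmod (v z))^2) / (1 - (cmod a)^2)"
      using iden[OF zb] den[OF zb] pa by (simp add: field_simps)
    also have "\<dots> \<ge> (1 - cmod a)^2 * (1 - (cmod z)^2) / (1 - (cmod a)^2)"
    proof (intro divide_right_mono mult_mono power_mono ge)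
      show "1 - (cmod z)^2 \<le> 1 - (cmod (v z))^2" using sch[OF nz] by (simp add: power_mono)
      show "0 \<le> 1 - (cmod z)^2" using nz by (simp add: abs_square_le_1)
    qed (use pa a1 in auto)
    also have "(1 - cmod a)^2 * (1 - (cmod z)^2) / (1 - (cmod a)^2) = c * (1 - (cmod z)^2)"
    proof -
      have e: "1 - (cmod a)^2 = (1 - cmod a)*(1 + cmod a)" by (simp add: power2_eq_square algebra_simps)
      have n1: "1 - cmod a \<noteq> 0" "1 + cmod a \<noteq> 0" using a1 norm_ge_zero[of a] by linarith+
      show ?thesis unfolding e c_def power2_eq_square[of "1 - cmod a"]
        using n1 by (simp add: divide_simps)
    qed
    finally show "c * (1 - (cmod z)^2) \<le> 1 - (cmod (u z))^2" .
  qed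
qed

lemma eps_le0:
  fixes x K :: real
  assumes "\<And>e. 0 < e \<Longrightarrow> e \<le> 1 \<Longrightarrow> x \<le> e * K"
  shows "x \<le> 0"
proof (rule ccontr)
  assume "\<not> x \<le> 0"
  then have x: "x > 0" by simp
  have K: "K \<ge> x" using assms[of 1] by simp
  define e where "e = min 1 (x / (2*K))"
  have e: "0 < e" "e \<le> 1" using x K unfolding e_def by auto
  have "x \<le> e * K" using assms e by blast
  also have "\<dots> \<le> (x / (2*K)) * K" using K x unfolding e_def by (intro mult_right_mono) auto
  also have "\<dots> = x / 2" using K x by simp
  finally show False using x by simp
qed

lemma cmod_1m_eq: "cmod (1 - complex_of_real e) = \<bar>1 - e\<bar>"
proof -
  have "1 - complex_of_real e = complex_of_real (1 - e)" by simp
  then show ?thesis by (metis norm_of_real)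
qed

lemma cmod_1m: "0 \<le> e \<Longrightarrow> e \<le> 1 \<Longrightarrow> cmod (1 + (- complex_of_real e)) \<le> 1"
  using cmod_1m_eq[of e] by simp

lemma cinner_norm_le: "cmod (cinner x p) \<le> norm x" if "norm p = 1"
  using cinner_CS[of x p] that by simp

lemma boundary_expansion:
  fixes f :: "complex \<Rightarrow> complex^'n" and \<eta> :: complex and p :: "complex^'n"
  assumes hol: "\<forall>i. (\<lambda>z. f z $ i) holomorphic_on ball 0 1"
    and d1: "\<forall>x\<in>cball 0 1. (f has_derivative blinfun_apply (Df x)) (at x within cball 0 1)"
    and cDf: "continuous_on (cball 0 1) Df"
    and M: "0 \<le> M"
    and tay: "\<forall>x\<in>cball 0 1. \<forall>y\<in>cball 0 1. norm (f y - f x - Df x (y - x)) \<le> M * (norm (y - x))^2"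
    and fb: "\<forall>z\<in>ball 0 1. norm (f z) < 1" and fc: "\<forall>z\<in>cball 0 1. norm (f z) \<le> 1"
    and eta: "cmod \<eta> = 1" and fe: "f \<eta> = p" and p: "norm p = 1"
  shows "\<exists>\<gamma>>0. \<exists>L. \<forall>s::real. 0 < s \<and> s \<le> 1 \<longrightarrow>
           norm (f ((1 - of_real s) * \<eta>) - p) \<le> L * s \<and>
           cmod (cinner (f ((1 - of_real s) * \<eta>)) p - (1 - of_real (s * \<gamma>))) \<le> M * s^2"
proof -
  define V where "V = Df \<eta> \<eta>"
  define g where "g = cinner V p"
  have etac: "\<eta> \<in> cball 0 1" using eta by simp
  have lin: "Df \<eta> (\<sigma> * \<eta>) $ j = \<sigma> * (V $ j)" for \<sigma> j
    unfolding V_def by (rule Df_complex_linear[OF hol d1 cDf etac])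
  have pp: "cinner p p = 1" using p by (simp add: cinner_self)
  have exp: "cmod (cinner (f ((1 + \<sigma>) * \<eta>)) p - (1 + \<sigma> * g)) \<le> M * (cmod \<sigma>)^2
           \<and> norm (f ((1 + \<sigma>) * \<eta>) - p - Df \<eta> (\<sigma> * \<eta>)) \<le> M * (cmod \<sigma>)^2"
    if s1: "cmod (1 + \<sigma>) \<le> 1" for \<sigma>
  proof -
    have yc: "(1 + \<sigma>) * \<eta> \<in> cball 0 1" using s1 eta by (simp add: norm_mult)
    define E where "E = f ((1 + \<sigma>) * \<eta>) - p - Df \<eta> (\<sigma> * \<eta>)"
    have dd: "(1 + \<sigma>) * \<eta> - \<eta> = \<sigma> * \<eta>" by (simp add: algebra_simps)
    have "norm (f ((1 + \<sigma>) * \<eta>) - f \<eta> - Df \<eta> ((1 + \<sigma>) * \<eta> - \<eta>)) \<le> M * (norm ((1 + \<sigma>) * \<eta> - \<eta>))^2"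
      using tay etac yc by blast
    then have "norm E \<le> M * (norm (\<sigma> * \<eta>))^2" unfolding E_def dd fe .
    then have En: "norm E \<le> M * (cmod \<sigma>)^2" using eta by (simp add: norm_mult)
    have c1: "cinner (Df \<eta> (\<sigma> * \<eta>)) p = \<sigma> * g"
      unfolding g_def cinner_def using lin by (simp add: sum_distrib_left mult.assoc)
    have "f ((1 + \<sigma>) * \<eta>) = p + Df \<eta> (\<sigma> * \<eta>) + E" unfolding E_def by simp
    then have "cinner (f ((1 + \<sigma>) * \<eta>)) p = 1 + \<sigma> * g + cinner E p"
      by (simp add: cinner_add_left pp c1)
    then have "cinner (f ((1 + \<sigma>) * \<eta>)) p - (1 + \<sigma> * g) = cinner E p" by simp
    then show ?thesis using cinner_norm_le[OF p, of E] En E_def by auto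
  qed
  have key: "Re (\<sigma> * g) \<le> M * (cmod \<sigma>)^2" if s1: "cmod (1 + \<sigma>) \<le> 1" for \<sigma>
  proof -
    have yc: "(1 + \<sigma>) * \<eta> \<in> cball 0 1" using s1 eta by (simp add: norm_mult)
    have "Re (cinner (f ((1 + \<sigma>) * \<eta>)) p) \<le> 1"
      using complex_Re_le_cmod cinner_norm_le[OF p] fc yc by (meson order_trans)
    moreover have "Re (cinner (f ((1 + \<sigma>) * \<eta>)) p - (1 + \<sigma> * g)) \<ge> - (M * (cmod \<sigma>)^2)"
      using exp[OF s1] abs_Re_le_cmod by (smt (verit))
    ultimately show ?thesis by simp
  qed
  have Im0: "Im g = 0"
  proof -
    define K where "K = 2 * M + cmod g"
    have a: "- Im g \<le> e * K" and b: "Im g \<le> e * K" if e: "0 < e" "e \<le> 1" for e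
    proof -
      have n1: "cmod (1 + Complex (- (e^2)) (s * e)) \<le> 1" if "s = 1 \<or> s = -1" for s
      proof -
        have "(cmod (1 + Complex (- (e^2)) (s * e)))^2 = (1 - e^2)^2 + e^2"
          unfolding cmod_power2 using that by (auto simp: power2_eq_square)
        also have "\<dots> \<le> 1" using e using mult_le_one[of e e] by (simp add: power2_eq_square algebra_simps)
        finally show ?thesis by (simp add: power_le_one_iff)
      qed
      have n2: "(cmod (Complex (- (e^2)) (s * e)))^2 \<le> 2 * e^2" if "s = 1 \<or> s = -1" for s
      proof -
        have "(cmod (Complex (- (e^2)) (s * e)))^2 = e^4 + e^2"
          unfolding cmod_power2 using that by (auto simp: power2_eq_square numeral_eq_Suc)
        also have "\<dots> \<le> 2 * e^2" using e by (simp add: power2_eq_square numeral_eq_Suc mult_le_one)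
        finally show ?thesis .
      qed
      have ReG: "\<bar>Re g\<bar> \<le> cmod g" by (rule abs_Re_le_cmod)
      have "Re (Complex (- (e^2)) (s * e) * g) \<le> M * (2 * e^2)" if "s = 1 \<or> s = -1" for s
        using key[OF n1[OF that]] n2[OF that] M by (smt (verit) mult_left_mono)
      from this[of 1] this[of "-1"]
      have r1: "- (e^2) * Re g - e * Im g \<le> M * (2 * e^2)" and r2: "- (e^2) * Re g + e * Im g \<le> M * (2 * e^2)"
        by auto
      have q1: "e^2 * Re g \<le> e^2 * cmod g" using ReG by (intro mult_left_mono) auto
      have q2: "- (e^2 * Re g) \<le> e^2 * cmod g" using ReG mult_left_mono[of "- Re g" "cmod g" "e^2"] by auto
      have t1: "- e * Im g \<le> e * (e * K)" and t2: "e * Im g \<le> e * (e * K)"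
        using r1 r2 q1 q2 unfolding K_def by (simp_all add: power2_eq_square algebra_simps)
      show "- Im g \<le> e * K" using mult_left_le_imp_le[of e "- Im g" "e*K"] t1 e by simp
      show "Im g \<le> e * K" using mult_left_le_imp_le[of e "Im g" "e*K"] t2 e by simp
    qed
    have "- Im g \<le> 0" by (rule eps_le0[of _ K]) (use a in auto)
    moreover have "Im g \<le> 0" by (rule eps_le0[of _ K]) (use b in auto)
    ultimately show ?thesis by simp
  qed
  have Re0: "Re g \<ge> 0"
  proof -
    have "- Re g \<le> e * M" if "0 < e" "e \<le> 1" for e
    proof -
      have "cmod (1 + (- of_real e)) \<le> 1" using that by (intro cmod_1m) auto
      from key[OF this] have "- e * Re g \<le> M * e^2" using that by simp
      then have "e * (- Re g) \<le> e * (M * e)" by (simp add: power2_eq_square algebra_simps)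
      then show ?thesis using mult_left_le_imp_le[of e "- Re g" "M*e"] that by (simp add: mult.commute)
    qed
    then have "- Re g \<le> 0" by (intro eps_le0[of _ M]) auto
    then show ?thesis by simp
  qed
  define u where "u z = cinner (f z) p" for z
  have hu: "u holomorphic_on ball 0 1"
    unfolding u_def cinner_def using hol by (intro holomorphic_intros) auto
  have ub: "\<forall>z\<in>ball 0 1. cmod (u z) < 1"
    unfolding u_def using cinner_norm_le[OF p] fb le_less_trans by blast
  obtain c where c: "c > 0" "\<forall>z\<in>ball 0 1. c * (1 - (cmod z)^2) \<le> 1 - (cmod (u z))^2"
    using schwarz_pick_lower[OF hu ub] by blast
  have gne: "g \<noteq> 0"
  proof
    assume g0: "g = 0"
    have "c \<le> e * (2 * M)" if e: "0 < e" "e \<le> 1" for e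
    proof -
      have zb: "(1 - of_real e) * \<eta> \<in> ball 0 1" using e eta by (simp add: norm_mult cmod_1m_eq)
      have "cmod (1 + (- of_real e)) \<le> 1" using e by (intro cmod_1m) auto
      from exp[OF this] g0 have d: "cmod (u ((1 - of_real e) * \<eta>) - 1) \<le> M * e^2"
        unfolding u_def by simp
      have nn: "cmod ((1 - of_real e) * \<eta>) = 1 - e" using e eta by (simp add: norm_mult cmod_1m_eq)
      have ee: "e * e \<le> e" using e by (simp add: mult_left_le_one_le)
      have "e \<le> 1 - (cmod ((1 - of_real e) * \<eta>))^2"
        unfolding nn using ee by (simp add: power2_eq_square algebra_simps)
      then have "c * e \<le> c * (1 - (cmod ((1 - of_real e) * \<eta>))^2)"
        using c(1) by (intro mult_left_mono) auto
      also have "\<dots> \<le> 1 - (cmod (u ((1 - of_real e) * \<eta>)))^2" using c(2) zb by blast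
      also have "\<dots> \<le> 2 * (1 - cmod (u ((1 - of_real e) * \<eta>)))"
      proof -
        have "0 \<le> (1 - cmod (u ((1 - of_real e) * \<eta>)))^2" by simp
        then show ?thesis by (simp add: power2_eq_square algebra_simps)
      qed
      also have "\<dots> \<le> 2 * cmod (u ((1 - of_real e) * \<eta>) - 1)"
        using norm_triangle_ineq2[of 1 "u ((1 - of_real e) * \<eta>)"] by (simp add: norm_minus_commute)
      also have "\<dots> \<le> 2 * (M * e^2)" using d by simp
      finally have "c * e \<le> e * (e * (2 * M))" by (simp add: power2_eq_square mult_ac)
      then show ?thesis using e by simp
    qed
    then have "c \<le> 0" by (intro eps_le0[of _ "2 * M"]) auto
    then show False using c by simp
  qed
  have gpos: "Re g > 0" using Im0 Re0 gne complex_eq_iff[of g 0] by auto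
  have greal: "g = of_real (Re g)" using Im0 by (simp add: complex_eq_iff)
  show ?thesis
  proof (rule exI[of _ "Re g"], intro conjI gpos, rule exI[of _ "norm (Df \<eta>) + M"], intro allI impI conjI)
    fix s :: real assume s: "0 < s \<and> s \<le> 1"
    have s1: "cmod (1 + (- of_real s)) \<le> 1" using s by (intro cmod_1m) auto
    have e1: "1 + - complex_of_real s = 1 - of_real s" by simp
    from exp[OF s1] have A: "cmod (cinner (f ((1 - of_real s) * \<eta>)) p - (1 - of_real s * g)) \<le> M * s^2"
      and B: "norm (f ((1 - of_real s) * \<eta>) - p - Df \<eta> (- of_real s * \<eta>)) \<le> M * s^2"
      using s by (simp_all add: e1)
    show "cmod (cinner (f ((1 - of_real s) * \<eta>)) p - (1 - of_real (s * Re g))) \<le> M * s^2"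
    proof -
      have eq: "of_real s * g = of_real (s * Re g)" using Im0 by (simp add: complex_eq_iff)
      show ?thesis unfolding eq[symmetric] by (rule A)
    qed
    have "norm (Df \<eta> (- of_real s * \<eta>)) \<le> norm (Df \<eta>) * s"
      using norm_blinfun[of "Df \<eta>" "- s * \<eta>"] eta s by (simp add: norm_mult)
    moreover have "M * s^2 \<le> M * s" using s M by (simp add: power2_eq_square mult_left_le_one_le mult_left_mono)
    ultimately have NN: "norm (f ((1 - of_real s) * \<eta>) - p) \<le> (norm (Df \<eta>) + M) * s"
      using B norm_triangle_ineq[of "f ((1 - of_real s) * \<eta>) - p - Df \<eta> (- of_real s * \<eta>)" "Df \<eta> (- of_real s * \<eta>)"]
      by (simp add: algebra_simps)
    then show "norm (f ((1 - of_real s) * \<eta>) - p) \<le> (norm (Df \<eta>) + M) * s" .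
  qed
qed

lemma Q_formula:
  fixes a :: complex and D1 D2 :: real
  assumes a: "a \<noteq> 0" and d1: "D1 \<noteq> 0" and d2: "D2 \<noteq> 0"
  defines "t \<equiv> (1 / a) / (1 / of_real D2)"
  shows "1 / of_real D1 - t * (1 / cnj a) - cnj t * (1 / a) + cnj t * t * (1 / of_real D2)
         = of_real (1 / D1 - D2 / (cmod a)^2)"
proof -
  have t: "t = of_real D2 / a" unfolding t_def by simp
  have ct: "cnj t = of_real D2 / cnj a" unfolding t by simp
  have aa: "a * cnj a = of_real ((cmod a)^2)" by (rule complex_norm_square[symmetric])
  have ca: "cnj a \<noteq> 0" using a by simp
  have "t * (1 / cnj a) = of_real D2 / (a * cnj a)" unfolding t by simp
  moreover have "cnj t * (1 / a) = of_real D2 / (a * cnj a)" unfolding ct by (simp add: mult.commute)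
  moreover have "cnj t * t * (1 / of_real D2) = of_real D2 / (a * cnj a)"
    unfolding ct t using d2 by (simp add: field_simps)
  ultimately show ?thesis unfolding aa by simp
qed

lemma abs2le: "\<bar>r\<bar> \<le> b \<Longrightarrow> \<bar>2 * r\<bar> \<le> 2 * b" for r b :: real
  by simp

lemma N_bound:
  fixes P R W :: complex and nX nY :: real
  shows "\<bar>(cmod (P + cnj R + W))^2 - (2 * Re P + nX) * (2 * Re R + nY) - (cmod (P - R))^2\<bar>
     \<le> 2 * ((cmod P + cmod R) * cmod W) + (cmod W)^2 + 2 * (cmod P * \<bar>nY\<bar>) + 2 * (cmod R * \<bar>nX\<bar>) + \<bar>nX\<bar> * \<bar>nY\<bar>"
proof -
  define a1 where "a1 = Re ((P + cnj R) * cnj W)"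
  define a2 where "a2 = Re P * nY"
  define a3 where "a3 = Re R * nX"
  have id: "(cmod (P + cnj R + W))^2 - (2 * Re P + nX) * (2 * Re R + nY) - (cmod (P - R))^2
     = 2 * a1 + (cmod W)^2 - 2 * a2 - 2 * a3 - nX * nY"
    unfolding cmod_power2 a1_def a2_def a3_def by (simp add: power2_eq_square algebra_simps)
  have "\<bar>a1\<bar> \<le> cmod ((P + cnj R) * cnj W)" unfolding a1_def by (rule abs_Re_le_cmod)
  also have "\<dots> \<le> (cmod P + cmod R) * cmod W"
    by (simp add: norm_mult mult_right_mono norm_triangle_le)
  finally have b1: "\<bar>2 * a1\<bar> \<le> 2 * ((cmod P + cmod R) * cmod W)" by (rule abs2le)
  have "\<bar>a2\<bar> \<le> cmod P * \<bar>nY\<bar>" unfolding a2_def abs_mult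
    using abs_Re_le_cmod[of P] by (rule mult_right_mono) simp
  then have b2: "\<bar>2 * a2\<bar> \<le> 2 * (cmod P * \<bar>nY\<bar>)" by (rule abs2le)
  have "\<bar>a3\<bar> \<le> cmod R * \<bar>nX\<bar>" unfolding a3_def abs_mult
    using abs_Re_le_cmod[of R] by (rule mult_right_mono) simp
  then have b3: "\<bar>2 * a3\<bar> \<le> 2 * (cmod R * \<bar>nX\<bar>)" by (rule abs2le)
  have b4: "\<bar>nX * nY\<bar> = \<bar>nX\<bar> * \<bar>nY\<bar>" by (rule abs_mult)
  have b5: "0 \<le> (cmod W)^2" by simp
  show ?thesis unfolding id using b1 b2 b3 b4 b5 by linarith
qed

lemma two_point_diff:
  assumes g: "g \<in> rkhs X k" and pg: "(\<lambda>x. \<phi> x * g x) \<in> rkhs X k"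
  obtains C1 C2 where "C1 \<ge> 0" "C2 \<ge> 0" "\<And>z w t. z \<in> X \<Longrightarrow> w \<in> X \<Longrightarrow> cmod (\<phi> z - \<phi> w) * cmod (g z)
     \<le> sqrt (C1 * \<bar>Re (k z z - t * k w z - cnj t * k z w + cnj t * t * k w w)\<bar>) * cmod (\<phi> w)
       + sqrt (C2 * \<bar>Re (k z z - t * k w z - cnj t * k z w + cnj t * t * k w w)\<bar>)"
proof -
  obtain C1 where C1: "\<And>z w t. z \<in> X \<Longrightarrow> w \<in> X \<Longrightarrow> (cmod (g z - t * g w))^2 \<le> C1 * Re (k z z - t * k w z - cnj t * k z w + cnj t * t * k w w)"
    using rkhs_two_point[OF g] by blast
  obtain C2 where C2: "\<And>z w t. z \<in> X \<Longrightarrow> w \<in> X \<Longrightarrow> (cmod (\<phi> z * g z - t * (\<phi> w * g w)))^2 \<le> C2 * Re (k z z - t * k w z - cnj t * k z w + cnj t * t * k w w)"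
    using rkhs_two_point[OF pg] by blast
  show ?thesis
  proof (rule that[of "\<bar>C1\<bar>" "\<bar>C2\<bar>"])
    fix z w t assume z: "z \<in> X" and w: "w \<in> X"
    define Q where "Q = Re (k z z - t * k w z - cnj t * k z w + cnj t * t * k w w)"
    have l: "cmod A \<le> sqrt (\<bar>C\<bar> * \<bar>Q\<bar>)" if "(cmod A)^2 \<le> C * Q" for A C
    proof -
      have "(cmod A)^2 \<le> \<bar>C\<bar> * \<bar>Q\<bar>" using that
        by (metis abs_ge_self abs_mult order_trans)
      then show ?thesis by (simp add: real_le_rsqrt)
    qed
    have a1: "cmod (g z - t * g w) \<le> sqrt (\<bar>C1\<bar> * \<bar>Q\<bar>)" using l C1[OF z w] unfolding Q_def by blast
    have a2: "cmod (\<phi> z * g z - t * (\<phi> w * g w)) \<le> sqrt (\<bar>C2\<bar> * \<bar>Q\<bar>)" using l C2[OF z w] unfolding Q_def by blast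
    have "(\<phi> z - \<phi> w) * g z = (\<phi> z * g z - t * (\<phi> w * g w)) - \<phi> w * (g z - t * g w)"
      by (simp add: algebra_simps)
    then have "cmod (\<phi> z - \<phi> w) * cmod (g z) \<le> cmod (\<phi> z * g z - t * (\<phi> w * g w)) + cmod (\<phi> w) * cmod (g z - t * g w)"
      by (metis norm_mult norm_triangle_ineq4)
    also have "\<dots> \<le> sqrt (\<bar>C2\<bar> * \<bar>Q\<bar>) + cmod (\<phi> w) * sqrt (\<bar>C1\<bar> * \<bar>Q\<bar>)"
      using a1 a2 by (intro add_mono mult_left_mono) auto
    finally show "cmod (\<phi> z - \<phi> w) * cmod (g z) \<le> sqrt (\<bar>C1\<bar> * \<bar>Q\<bar>) * cmod (\<phi> w) + sqrt (\<bar>C2\<bar> * \<bar>Q\<bar>)"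
      by (simp add: mult.commute)
  qed auto
qed

lemma aux_eq1: "D1 \<noteq> 0 \<Longrightarrow> m2 \<noteq> 0 \<Longrightarrow> 1 / D1 - D2 / m2 = (m2 - D1 * D2) / (D1 * m2)" for D1 D2 m2 :: real
  by (simp add: field_simps)

lemma aux_eq2: "\<gamma> > 0 \<Longrightarrow> s > 0 \<Longrightarrow> (A * s^3) / ((\<gamma> * s) * (\<gamma> * s / 2)^2) = 4 * A / \<gamma>^3" for A \<gamma> s :: real
  by (simp add: field_simps power2_eq_square power3_eq_cube)

lemma local_estimate:
  fixes x y p :: "complex^'n" and s L K \<gamma> :: real
  assumes p: "norm p = 1" and xb: "norm x < 1" and yb: "norm y < 1"
    and s: "0 < s" "s \<le> 1" and L: "0 \<le> L"
    and hX: "norm (x - p) \<le> L * s" and hY: "norm (y - p) \<le> L * s"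
    and hPR: "cmod (cinner x p - cinner y p) \<le> K * s^2"
    and g: "0 < \<gamma>" and hD: "\<gamma> * s \<le> 1 - (norm x)^2"
  shows "1 - cinner x y \<noteq> 0"
    and "\<bar>1 / (1 - (norm x)^2) - (1 - (norm y)^2) / (cmod (1 - cinner x y))^2\<bar>
         \<le> 4 * (K^2 + 8 * L^3 + 2 * L^4) / \<gamma>^3"
proof -
  define X where "X = x - p"
  define Y where "Y = y - p"
  define P where "P = cinner X p"
  define R where "R = cinner Y p"
  define W where "W = cinner X Y"
  define nX where "nX = (norm X)^2"
  define nY where "nY = (norm Y)^2"
  define c where "c = cinner x y"
  define D1 where "D1 = 1 - (norm x)^2"
  define D2 where "D2 = 1 - (norm y)^2"
  define a where "a = L * s"
  have a0: "0 \<le> a" unfolding a_def using L s by simp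
  have pp: "cinner p p = 1" using p by (simp add: cinner_self)
  have xe: "x = p + X" and ye: "y = p + Y" unfolding X_def Y_def by simp_all
  have PR: "P - R = cinner x p - cinner y p"
    unfolding P_def R_def X_def Y_def by (simp add: cinner_diff_left)
  have ce: "c = 1 + cnj R + P + W"
    unfolding c_def xe ye P_def R_def W_def
    by (simp add: cinner_add_left cinner_add_right pp cinner_cnj)
  have sq: "(norm (p + Z))^2 = 1 + 2 * Re (cinner Z p) + (norm Z)^2" for Z
  proof -
    have "complex_of_real ((norm (p + Z))^2) = cinner (p + Z) (p + Z)" by (simp add: cinner_self)
    also have "\<dots> = 1 + cnj (cinner Z p) + cinner Z p + of_real ((norm Z)^2)"
      unfolding cinner_add_left cinner_add_right pp by (simp add: cinner_cnj cinner_self)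
    finally have "complex_of_real ((norm (p + Z))^2) = 1 + cnj (cinner Z p) + cinner Z p + of_real ((norm Z)^2)" .
    then have "Re (complex_of_real ((norm (p + Z))^2)) = Re (1 + cnj (cinner Z p) + cinner Z p + of_real ((norm Z)^2))"
      by simp
    then show ?thesis by simp
  qed
  have D1e: "D1 = - (2 * Re P + nX)" unfolding D1_def xe sq P_def nX_def by simp
  have D2e: "D2 = - (2 * Re R + nY)" unfolding D2_def ye sq R_def nY_def by simp
  have onec: "1 - c = - (P + cnj R + W)" unfolding ce by simp
  define N where "N = (cmod (1 - c))^2 - D1 * D2"
  have Ne: "N = (cmod (P + cnj R + W))^2 - (2 * Re P + nX) * (2 * Re R + nY)"
    unfolding N_def onec D1e D2e norm_minus_cancel by (simp add: algebra_simps)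
  have nb: "\<bar>N - (cmod (P - R))^2\<bar>
     \<le> 2 * ((cmod P + cmod R) * cmod W) + (cmod W)^2 + 2 * (cmod P * \<bar>nY\<bar>) + 2 * (cmod R * \<bar>nX\<bar>) + \<bar>nX\<bar> * \<bar>nY\<bar>"
    unfolding Ne by (rule N_bound)
  have nXa: "\<bar>nX\<bar> \<le> a^2" unfolding nX_def a_def X_def using hX by (simp add: power_mono)
  have nYa: "\<bar>nY\<bar> \<le> a^2" unfolding nY_def a_def Y_def using hY by (simp add: power_mono)
  have Pa: "cmod P \<le> a" unfolding P_def a_def X_def using cinner_norm_le[OF p, of "x - p"] hX by simp
  have Ra: "cmod R \<le> a" unfolding R_def a_def Y_def using cinner_norm_le[OF p, of "y - p"] hY by simp
  have Wa: "cmod W \<le> a^2"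
  proof -
    have "cmod W \<le> norm X * norm Y" unfolding W_def by (rule cinner_CS)
    also have "\<dots> \<le> a * a" unfolding a_def X_def Y_def using hX hY a0 by (intro mult_mono) (auto simp: a_def)
    finally show ?thesis by (simp add: power2_eq_square)
  qed
  have h1: "(cmod P + cmod R) * cmod W \<le> (a + a) * a^2" using Pa Ra Wa a0 by (intro mult_mono) auto
  have h2: "(cmod W)^2 \<le> (a^2)^2" using Wa by (intro power_mono) auto
  have h3: "cmod P * \<bar>nY\<bar> \<le> a * a^2" using Pa nYa a0 by (intro mult_mono) auto
  have h4: "cmod R * \<bar>nX\<bar> \<le> a * a^2" using Ra nXa a0 by (intro mult_mono) auto
  have h5: "\<bar>nX\<bar> * \<bar>nY\<bar> \<le> a^2 * a^2" using nXa nYa a0 by (intro mult_mono) auto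
  have "\<bar>N - (cmod (P - R))^2\<bar> \<le> 8 * a^3 + 2 * a^4"
  proof -
    have "2 * ((a + a) * a^2) + (a^2)^2 + 2 * (a * a^2) + 2 * (a * a^2) + a^2 * a^2 = 8 * a^3 + 2 * a^4"
      by (simp add: power2_eq_square power3_eq_cube power4_eq_xxxx algebra_simps)
    then show ?thesis using nb h1 h2 h3 h4 h5 by linarith
  qed
  moreover have "(cmod (P - R))^2 \<le> K^2 * s^3"
  proof -
    have K0: "0 \<le> K * s^2" using hPR by (meson norm_ge_zero order_trans)
    have "(cmod (P - R))^2 \<le> (K * s^2)^2" unfolding PR using hPR by (intro power_mono) auto
    also have "\<dots> = K^2 * s^3 * s" by (simp add: power2_eq_square power3_eq_cube algebra_simps)
    also have "\<dots> \<le> K^2 * s^3" using s by (intro mult_left_le) auto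
    finally show ?thesis .
  qed
  moreover have "8 * a^3 + 2 * a^4 \<le> (8 * L^3 + 2 * L^4) * s^3"
  proof -
    have "a^4 = L^4 * s^3 * s" unfolding a_def by (simp add: power4_eq_xxxx power3_eq_cube algebra_simps)
    also have "\<dots> \<le> L^4 * s^3" using s L by (intro mult_left_le) auto
    finally have "a^4 \<le> L^4 * s^3" .
    moreover have "a^3 = L^3 * s^3" unfolding a_def by (simp add: power_mult_distrib)
    ultimately show ?thesis by (simp add: algebra_simps)
  qed
  moreover have "\<bar>N\<bar> \<le> \<bar>N - (cmod (P-R))^2\<bar> + (cmod (P-R))^2"
    using abs_triangle_ineq[of "N - (cmod (P-R))^2" "(cmod (P-R))^2"] by simp
  moreover have "(K^2 + 8 * L^3 + 2 * L^4) * s^3 = K^2 * s^3 + (8 * L^3 + 2 * L^4) * s^3"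
    by (simp add: algebra_simps)
  ultimately have Nb: "\<bar>N\<bar> \<le> (K^2 + 8 * L^3 + 2 * L^4) * s^3" by linarith
  have D1g: "\<gamma> * s \<le> D1" using hD unfolding D1_def .
  have D1p: "0 < D1" using D1g g s by (meson mult_pos_pos order_less_le_trans)
  have ny1: "norm y \<le> 1" using yb by simp
  have cm: "cmod c \<le> norm x"
  proof -
    have "cmod c \<le> norm x * norm y" unfolding c_def by (rule cinner_CS)
    also have "\<dots> \<le> norm x" using ny1 by (simp add: mult_left_le)
    finally show ?thesis .
  qed
  have m1: "D1 / 2 \<le> cmod (1 - c)"
  proof -
    have "1 - norm x \<le> cmod (1 - c)" using cm norm_triangle_ineq2[of 1 c] by simp
    moreover have "D1 \<le> 2 * (1 - norm x)"
    proof -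
      have "0 \<le> (1 - norm x)^2" by simp
      then show ?thesis unfolding D1_def by (simp add: power2_eq_square algebra_simps)
    qed
    ultimately show ?thesis by simp
  qed
  have m0: "0 < cmod (1 - c)" using m1 D1p by linarith
  show "1 - cinner x y \<noteq> 0" using m0 unfolding c_def by auto
  have eq: "1 / D1 - D2 / (cmod (1 - c))^2 = N / (D1 * (cmod (1 - c))^2)"
    unfolding N_def using D1p m0 by (intro aux_eq1) auto
  have pos: "0 < D1 * (cmod (1 - c))^2" using D1p m0 by simp
  have "\<bar>N / (D1 * (cmod (1 - c))^2)\<bar> = \<bar>N\<bar> / (D1 * (cmod (1 - c))^2)"
    by (simp only: abs_divide abs_of_pos[OF pos])
  also have "\<dots> \<le> ((K^2 + 8 * L^3 + 2 * L^4) * s^3) / ((\<gamma> * s) * (\<gamma> * s / 2)^2)"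
  proof (rule frac_le)
    show "0 \<le> (K^2 + 8 * L^3 + 2 * L^4) * s^3" using Nb by linarith
    show "0 < (\<gamma> * s) * (\<gamma> * s / 2)^2" using g s by simp
    show "(\<gamma> * s) * (\<gamma> * s / 2)^2 \<le> D1 * (cmod (1 - c))^2"
    proof (rule mult_mono)
      show "(\<gamma> * s / 2)^2 \<le> (cmod (1 - c))^2"
        using m1 D1g g s by (intro power_mono) auto
    qed (use D1g g s D1p in auto)
  qed (rule Nb)
  also have "\<dots> = 4 * (K^2 + 8 * L^3 + 2 * L^4) / \<gamma>^3"
    by (rule aux_eq2[OF g s(1)])
  finally have fin: "\<bar>1 / D1 - D2 / (cmod (1 - c))^2\<bar> \<le> 4 * (K^2 + 8 * L^3 + 2 * L^4) / \<gamma>^3"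
    by (simp only: eq)
  then show "\<bar>1 / (1 - (norm x)^2) - (1 - (norm y)^2) / (cmod (1 - cinner x y))^2\<bar>
         \<le> 4 * (K^2 + 8 * L^3 + 2 * L^4) / \<gamma>^3"
    by (simp only: D1_def D2_def c_def)
qed

lemma kf_Q:
  fixes f :: "complex \<Rightarrow> complex^'n"
  assumes nx: "norm (f z) < 1" and ny: "norm (f w) < 1" and c1: "1 - cinner (f z) (f w) \<noteq> 0"
  shows "Re (kf f z z - (kf f z w / kf f w w) * kf f w z - cnj (kf f z w / kf f w w) * kf f z w
            + cnj (kf f z w / kf f w w) * (kf f z w / kf f w w) * kf f w w)
       = 1 / (1 - (norm (f z))^2) - (1 - (norm (f w))^2) / (cmod (1 - cinner (f z) (f w)))^2"
proof -
  define a where "a = 1 - cinner (f z) (f w)"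
  define D1 where "D1 = 1 - (norm (f z))^2"
  define D2 where "D2 = 1 - (norm (f w))^2"
  have d1: "D1 \<noteq> 0" unfolding D1_def using power_strict_mono[OF nx norm_ge_zero, of 2] by simp
  have d2: "D2 \<noteq> 0" unfolding D2_def using power_strict_mono[OF ny norm_ge_zero, of 2] by simp
  have k1: "kf f z z = 1 / of_real D1" unfolding kf_def D1_def by (simp add: cinner_self)
  have k2: "kf f w w = 1 / of_real D2" unfolding kf_def D2_def by (simp add: cinner_self)
  have k3: "kf f z w = 1 / a" unfolding kf_def a_def by simp
  have k4: "kf f w z = 1 / cnj a" unfolding kf_def a_def by (simp add: cinner_cnj)
  have "kf f z z - (kf f z w / kf f w w) * kf f w z - cnj (kf f z w / kf f w w) * kf f z w
            + cnj (kf f z w / kf f w w) * (kf f z w / kf f w w) * kf f w w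
        = of_real (1 / D1 - D2 / (cmod a)^2)"
    unfolding k1 k2 k3 k4 using Q_formula[OF _ d1 d2, of a] c1 unfolding a_def by simp
  then show ?thesis unfolding D1_def D2_def a_def by simp
qed

lemma norm_sq_expand:
  fixes x p :: "complex^'n"
  assumes p: "norm p = 1"
  shows "(norm x)^2 = 1 + 2 * (Re (cinner x p) - 1) + (norm (x - p))^2"
proof -
  have pp: "cinner p p = 1" using p by (simp add: cinner_self)
  have "complex_of_real ((norm x)^2) = cinner (p + (x - p)) (p + (x - p))" by (simp add: cinner_self)
  also have "\<dots> = 1 + cnj (cinner (x - p) p) + cinner (x - p) p + of_real ((norm (x - p))^2)"
    unfolding cinner_add_left cinner_add_right pp by (simp add: cinner_cnj cinner_self)
  finally have "Re (complex_of_real ((norm x)^2)) = Re (1 + cnj (cinner (x - p) p) + cinner (x - p) p + of_real ((norm (x - p))^2))"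
    by simp
  then have "(norm x)^2 = 1 + 2 * Re (cinner (x - p) p) + (norm (x - p))^2" by simp
  moreover have "cinner (x - p) p = cinner x p - 1" by (simp add: cinner_diff_left pp)
  ultimately show ?thesis by simp
qed

theorem theorem2p4:
  fixes V :: "(complex^'n) set" and f :: "complex \<Rightarrow> complex^'n"
    and \<phi> \<psi> :: "complex \<Rightarrow> complex" and \<xi> \<zeta> :: complex
  assumes "analytic_disc_attached V f"
    and "\<xi> \<in> sphere 0 1" and "\<zeta> \<in> sphere 0 1" and "\<xi> \<noteq> \<zeta>"
    and "f \<xi> = f \<zeta>"
    and "\<phi> \<in> Mf f"
    and "continuous_on (cball 0 1) \<psi>" and "\<forall>z\<in>ball 0 1. \<psi> z = \<phi> z"
  shows "\<psi> \<xi> = \<psi> \<zeta>"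
proof -
  have fimg: "f ` ball 0 1 \<subseteq> ball 0 1" and hol: "\<forall>i. (\<lambda>z. f z $ i) holomorphic_on ball 0 1"
    and C2: "C2_on_closed_disc f" and sph: "\<forall>x\<in>cball 0 1. norm (f x) = 1 \<longleftrightarrow> cmod x = 1"
    using assms(1) unfolding analytic_disc_attached_def by auto
  have fb: "\<forall>z\<in>ball 0 1. norm (f z) < 1" using fimg by auto
  have fc: "\<forall>z\<in>cball 0 1. norm (f z) \<le> 1"
  proof
    fix z :: complex assume z: "z \<in> cball 0 1"
    show "norm (f z) \<le> 1"
    proof (cases "cmod z = 1")
      case True then have "norm (f z) = 1" using sph z by blast
      then show ?thesis by simp
    next
      case False then have "z \<in> ball 0 1" using z by auto
      then show ?thesis using fb by (auto intro: less_imp_le)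
    qed
  qed
  define p where "p = f \<xi>"
  have xi: "cmod \<xi> = 1" and ze: "cmod \<zeta> = 1" using assms(2,3) by auto
  have p1: "norm p = 1" using sph xi unfolding p_def by auto
  have fz: "f \<zeta> = p" using assms(5) unfolding p_def by simp
  obtain Df M where d1: "\<forall>x\<in>cball 0 1. (f has_derivative blinfun_apply (Df x)) (at x within cball 0 1)"
    and cDf: "continuous_on (cball 0 1) Df" and M0: "0 \<le> M"
    and tay: "\<forall>x\<in>cball 0 1. \<forall>y\<in>cball 0 1. norm (f y - f x - Df x (y - x)) \<le> M * (norm (y - x))^2"
    using C2_facts[OF C2] by blast
  obtain \<gamma>1 L1 where g1: "\<gamma>1 > 0" and e1: "\<forall>s::real. 0 < s \<and> s \<le> 1 \<longrightarrow>
           norm (f ((1 - of_real s) * \<xi>) - p) \<le> L1 * s \<and>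
           cmod (cinner (f ((1 - of_real s) * \<xi>)) p - (1 - of_real (s * \<gamma>1))) \<le> M * s^2"
    using boundary_expansion[OF hol d1 cDf M0 tay fb fc xi p_def[symmetric] p1] by blast
  obtain \<gamma>2 L2 where g2: "\<gamma>2 > 0" and e2: "\<forall>s::real. 0 < s \<and> s \<le> 1 \<longrightarrow>
           norm (f ((1 - of_real s) * \<zeta>) - p) \<le> L2 * s \<and>
           cmod (cinner (f ((1 - of_real s) * \<zeta>)) p - (1 - of_real (s * \<gamma>2))) \<le> M * s^2"
    using boundary_expansion[OF hol d1 cDf M0 tay fb fc ze fz p1] by blast
  define g where "g z = - Ln (1 - cinner (f z) p)" for z
  have gH: "g \<in> rkhs (ball 0 1) (kf f)" unfolding g_def by (rule log_in_rkhs[OF fb p1])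
  have pgH: "(\<lambda>x. \<phi> x * g x) \<in> rkhs (ball 0 1) (kf f)"
    using assms(6) gH unfolding Mf_def multipliers_def by blast
  obtain C1 C2 where C1: "C1 \<ge> 0" and C2: "C2 \<ge> 0" and CC: "\<And>z w t. z \<in> ball 0 1 \<Longrightarrow> w \<in> ball 0 1 \<Longrightarrow>
     cmod (\<phi> z - \<phi> w) * cmod (g z)
     \<le> sqrt (C1 * \<bar>Re (kf f z z - t * kf f w z - cnj t * kf f z w + cnj t * t * kf f w w)\<bar>) * cmod (\<phi> w)
       + sqrt (C2 * \<bar>Re (kf f z z - t * kf f w z - cnj t * kf f z w + cnj t * t * kf f w w)\<bar>)"
    using two_point_diff[OF gH pgH] by blast
  have "compact (\<psi> ` cball 0 1)" by (rule compact_continuous_image[OF assms(7)]) simp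
  then obtain Mp where Mp: "Mp > 0" "\<forall>y\<in>\<psi> ` cball 0 1. norm y \<le> Mp"
    using compact_imp_bounded bounded_pos by metis
  define lam where "lam = \<gamma>1 / \<gamma>2"
  have lam0: "lam > 0" unfolding lam_def using g1 g2 by simp
  define L where "L = \<bar>L1\<bar> + \<bar>L2\<bar> * lam + 1"
  have L0: "L \<ge> 0" unfolding L_def using lam0 by simp
  define Kp where "Kp = M * (1 + lam^2)"
  define B where "B = 4 * (Kp^2 + 8 * L^3 + 2 * L^4) / \<gamma>1^3"
  define K0 where "K0 = sqrt (C1 * B) * Mp + sqrt (C2 * B)"
  have B0: "B \<ge> 0" unfolding B_def using L0 g1 by (intro divide_nonneg_pos mult_nonneg_nonneg add_nonneg_nonneg) auto
  have K00: "K0 \<ge> 0" unfolding K0_def using Mp C1 C2 B0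
    by (intro add_nonneg_nonneg mult_nonneg_nonneg real_sqrt_ge_zero) auto
  define s0 where "s0 = min (min 1 (1/lam)) (\<gamma>1 / (2 * M + L^2 + 1))"
  have s00: "s0 > 0" unfolding s0_def using lam0 g1 M0 by (simp add: add_nonneg_pos)
  define zs where "zs s = (1 - complex_of_real s) * \<xi>" for s
  define ws where "ws s = (1 - complex_of_real (lam * s)) * \<zeta>" for s
  have est: "cmod (\<psi> (zs s) - \<psi> (ws s)) * cmod (g (zs s)) \<le> K0 \<and> - ln (2 * \<gamma>1 * s) \<le> cmod (g (zs s))"
    if s: "0 < s" "s < s0" for s
  proof -
    have sl1: "s < 1" and sl2: "s < 1/lam" and sl3: "s < \<gamma>1 / (2 * M + L^2 + 1)"
      using s unfolding s0_def by auto
    have ls1: "lam * s < 1" using sl2 lam0 by (simp add: field_simps)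
    have ls0: "0 < lam * s" using lam0 s by simp
    have sg: "s * (2 * M + L^2 + 1) < \<gamma>1"
      using sl3 M0 by (simp add: pos_less_divide_eq add_nonneg_pos)
    have zb: "zs s \<in> ball 0 1" unfolding zs_def using s sl1 xi by (simp add: norm_mult cmod_1m_eq)
    have wb: "ws s \<in> ball 0 1" unfolding ws_def using ls0 ls1 ze by (simp add: norm_mult cmod_1m_eq del: of_real_mult)
    define x where "x = f (zs s)"
    define y where "y = f (ws s)"
    have nx: "norm x < 1" unfolding x_def using fb zb by blast
    have ny: "norm y < 1" unfolding y_def using fb wb by blast
    have E1: "norm (x - p) \<le> L1 * s" "cmod (cinner x p - (1 - of_real (s * \<gamma>1))) \<le> M * s^2"
      using e1 s sl1 unfolding x_def zs_def by auto
    have E2: "norm (y - p) \<le> L2 * (lam * s)" "cmod (cinner y p - (1 - of_real ((lam * s) * \<gamma>2))) \<le> M * (lam * s)^2"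
      using e2 ls0 ls1 unfolding y_def ws_def by auto
    have lg: "(lam * s) * \<gamma>2 = s * \<gamma>1" unfolding lam_def using g2 by simp
    have hX: "norm (x - p) \<le> L * s"
    proof -
      have "0 \<le> \<bar>L2\<bar> * lam" using lam0 by simp
      then have "L1 \<le> L" unfolding L_def by linarith
      then have "L1 * s \<le> L * s" using s by (intro mult_right_mono) auto
      then show ?thesis using E1(1) by linarith
    qed
    have hY: "norm (y - p) \<le> L * s"
    proof -
      have "L2 * (lam * s) \<le> (\<bar>L2\<bar> * lam) * s" using s lam0 by (simp add: mult.assoc[symmetric] mult_right_mono)
      also have "\<dots> \<le> L * s" unfolding L_def using s lam0 by (intro mult_right_mono) (auto simp: add_increasing2)
      finally show ?thesis using E2(1) by linarith
    qed
    have hPR: "cmod (cinner x p - cinner y p) \<le> Kp * s^2"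
    proof -
      have "cinner x p - cinner y p = (cinner x p - (1 - of_real (s * \<gamma>1))) - (cinner y p - (1 - of_real ((lam * s) * \<gamma>2)))"
        unfolding lg by simp
      then have "cmod (cinner x p - cinner y p) \<le> M * s^2 + M * (lam * s)^2"
        using E1(2) E2(2) norm_triangle_ineq4 by (smt (verit))
      also have "\<dots> = Kp * s^2" unfolding Kp_def by (simp add: power_mult_distrib algebra_simps)
      finally show ?thesis .
    qed
    have hD: "\<gamma>1 * s \<le> 1 - (norm x)^2"
    proof -
      have "Re (cinner x p) - (1 - s * \<gamma>1) \<le> M * s^2"
        using E1(2) complex_Re_le_cmod[of "cinner x p - (1 - of_real (s * \<gamma>1))"] by simp
      moreover have "(norm (x - p))^2 \<le> (L * s)^2" using hX by (intro power_mono) auto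
      moreover have "(norm x)^2 = 1 + 2 * (Re (cinner x p) - 1) + (norm (x - p))^2"
        by (rule norm_sq_expand[OF p1])
      ultimately have "1 - (norm x)^2 \<ge> 2 * s * \<gamma>1 - (2 * M + L^2) * s^2"
        by (simp add: power_mult_distrib algebra_simps)
      moreover have "(2 * M + L^2) * s^2 \<le> s * \<gamma>1"
      proof -
        have "(2 * M + L^2) * s^2 = s * (s * (2 * M + L^2))" by (simp add: power2_eq_square algebra_simps)
        also have "\<dots> \<le> s * \<gamma>1"
        proof (rule mult_left_mono)
          show "s * (2 * M + L^2) \<le> \<gamma>1" using sg s by (simp add: algebra_simps)
        qed (use s in auto)
        finally show ?thesis .
      qed
      ultimately show ?thesis by (simp add: algebra_simps)
    qed
    have sle: "s \<le> 1" using sl1 by simp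
    note LE = local_estimate[OF p1 nx ny s(1) sle L0 hX hY hPR g1 hD]
    define t where "t = kf f (zs s) (ws s) / kf f (ws s) (ws s)"
    have Qeq: "Re (kf f (zs s) (zs s) - t * kf f (ws s) (zs s) - cnj t * kf f (zs s) (ws s) + cnj t * t * kf f (ws s) (ws s))
       = 1 / (1 - (norm x)^2) - (1 - (norm y)^2) / (cmod (1 - cinner x y))^2"
      unfolding t_def x_def y_def by (rule kf_Q) (use nx ny LE(1) x_def y_def in auto)
    have QB: "\<bar>Re (kf f (zs s) (zs s) - t * kf f (ws s) (zs s) - cnj t * kf f (zs s) (ws s) + cnj t * t * kf f (ws s) (ws s))\<bar> \<le> B"
      unfolding Qeq B_def using LE(2) by simp
    have pw: "cmod (\<phi> (ws s)) \<le> Mp"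
    proof -
      have "\<psi> (ws s) = \<phi> (ws s)" using assms(8) wb by blast
      moreover have "ws s \<in> cball 0 1" using wb by auto
      ultimately show ?thesis using Mp(2) by force
    qed
    have "cmod (\<phi> (zs s) - \<phi> (ws s)) * cmod (g (zs s)) \<le> sqrt (C1 * B) * Mp + sqrt (C2 * B)"
    proof (rule order_trans[OF CC[OF zb wb, of t]], rule add_mono)
      show "sqrt (C1 * \<bar>Re (kf f (zs s) (zs s) - t * kf f (ws s) (zs s) - cnj t * kf f (zs s) (ws s) + cnj t * t * kf f (ws s) (ws s))\<bar>) * cmod (\<phi> (ws s))
            \<le> sqrt (C1 * B) * Mp"
        using QB C1 pw by (intro mult_mono real_sqrt_le_mono mult_left_mono) auto
      show "sqrt (C2 * \<bar>Re (kf f (zs s) (zs s) - t * kf f (ws s) (zs s) - cnj t * kf f (zs s) (ws s) + cnj t * t * kf f (ws s) (ws s))\<bar>)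
            \<le> sqrt (C2 * B)"
        using QB C2 by (intro real_sqrt_le_mono mult_left_mono) auto
    qed
    moreover have "\<psi> (zs s) = \<phi> (zs s)" "\<psi> (ws s) = \<phi> (ws s)" using assms(8) zb wb by auto
    ultimately have part1: "cmod (\<psi> (zs s) - \<psi> (ws s)) * cmod (g (zs s)) \<le> K0"
      unfolding K0_def by simp
    define w0 where "w0 = 1 - cinner x p"
    have w0ne: "w0 \<noteq> 0"
    proof
      assume "w0 = 0"
      then have "cinner x p = 1" unfolding w0_def by simp
      moreover have "cmod (cinner x p) < 1" using cinner_norm_le[OF p1, of x] nx by simp
      ultimately show False by simp
    qed
    have w0b: "cmod w0 \<le> 2 * \<gamma>1 * s"
    proof -
      have weq: "w0 = of_real (s * \<gamma>1) - (cinner x p - (1 - of_real (s * \<gamma>1)))" unfolding w0_def by simp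
      have n1: "cmod (complex_of_real (s * \<gamma>1)) = s * \<gamma>1" using s g1 by (simp only: norm_of_real) simp
      have "cmod w0 \<le> cmod (complex_of_real (s * \<gamma>1)) + cmod (cinner x p - (1 - of_real (s * \<gamma>1)))"
        unfolding weq by (rule norm_triangle_ineq4)
      then have "cmod w0 \<le> s * \<gamma>1 + M * s^2" using n1 E1(2) by linarith
      moreover have "M * s^2 \<le> s * \<gamma>1"
      proof -
        have "M * s^2 = s * (s * M)" by (simp add: power2_eq_square)
        also have "\<dots> \<le> s * \<gamma>1"
        proof (rule mult_left_mono)
          have "s * M \<le> s * (2 * M + L^2 + 1)" using s M0 by (intro mult_left_mono) auto
          then show "s * M \<le> \<gamma>1" using sg by linarith
        qed (use s in auto)
        finally show ?thesis .
      qed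
      ultimately show ?thesis by (simp add: algebra_simps)
    qed
    have pos: "0 < cmod w0" using w0ne by simp
    have "ln (cmod w0) \<le> ln (2 * \<gamma>1 * s)"
      using pos w0b g1 s(1) by (subst ln_le_cancel_iff) auto
    then have "- ln (2 * \<gamma>1 * s) \<le> - ln (cmod w0)" by simp
    also have "- ln (cmod w0) \<le> \<bar>Re (Ln w0)\<bar>" using w0ne by simp
    also have "\<dots> \<le> cmod (Ln w0)" by (rule abs_Re_le_cmod)
    also have "\<dots> = cmod (g (zs s))" unfolding g_def w0_def x_def by simp
    finally show ?thesis using part1 by simp
  qed
  show ?thesis
  proof (rule ccontr)
    assume ne: "\<psi> \<xi> \<noteq> \<psi> \<zeta>"
    define d where "d = cmod (\<psi> \<xi> - \<psi> \<zeta>)"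
    have d0: "d > 0" unfolding d_def using ne by simp
    have xic: "\<xi> \<in> cball 0 1" and zec: "\<zeta> \<in> cball 0 1" using xi ze by auto
    have d3: "d / 3 > 0" using d0 by simp
    have cont: "\<forall>x\<in>cball 0 1. \<forall>\<epsilon>>0. \<exists>\<delta>>0. \<forall>x'\<in>cball 0 1. dist x' x < \<delta> \<longrightarrow> dist (\<psi> x') (\<psi> x) < \<epsilon>"
      using assms(7) unfolding continuous_on_iff .
    obtain \<delta>1 where dl1: "\<delta>1 > 0" "\<forall>x'\<in>cball 0 1. dist x' \<xi> < \<delta>1 \<longrightarrow> dist (\<psi> x') (\<psi> \<xi>) < d / 3"
      using cont xic d3 by blast
    obtain \<delta>2 where dl2: "\<delta>2 > 0" "\<forall>x'\<in>cball 0 1. dist x' \<zeta> < \<delta>2 \<longrightarrow> dist (\<psi> x') (\<psi> \<zeta>) < d / 3"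
      using cont zec d3 by blast
    define s where "s = min (min (s0/2) (\<delta>1/2)) (min (\<delta>2/(2*lam)) (exp (-(3*K0/d + 1)) / (2*\<gamma>1)))"
    have s0': "0 < s" unfolding s_def using s00 dl1 dl2 lam0 g1 by simp
    have s1': "s < s0" unfolding s_def using s00 by linarith
    have s2': "s < \<delta>1" unfolding s_def using dl1 by linarith
    have s3': "lam * s < \<delta>2"
    proof -
      have "s \<le> \<delta>2/(2*lam)" unfolding s_def by linarith
      then have "lam * s \<le> \<delta>2 / 2" using lam0 by (simp add: field_simps)
      then show ?thesis using dl2 by linarith
    qed
    have s4': "2 * \<gamma>1 * s \<le> exp (-(3*K0/d + 1))"
    proof -
      have "s \<le> exp (-(3*K0/d + 1)) / (2*\<gamma>1)" unfolding s_def by linarith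
      then show ?thesis using g1 by (simp add: field_simps)
    qed
    have zsb: "zs s \<in> cball 0 1" "dist (zs s) \<xi> < \<delta>1"
    proof -
      have "zs s - \<xi> = - (of_real s * \<xi>)" unfolding zs_def by (simp add: algebra_simps)
      then show "dist (zs s) \<xi> < \<delta>1" using s2' s0' xi by (simp add: dist_norm norm_mult)
      show "zs s \<in> cball 0 1" unfolding zs_def using s0' s1' s00 xi
        by (simp add: norm_mult cmod_1m_eq s0_def)
    qed
    have wsb: "ws s \<in> cball 0 1" "dist (ws s) \<zeta> < \<delta>2"
    proof -
      have "ws s - \<zeta> = - (of_real (lam * s) * \<zeta>)" unfolding ws_def by (simp add: algebra_simps)
      then show "dist (ws s) \<zeta> < \<delta>2" using s3' s0' lam0 ze by (simp add: dist_norm norm_mult)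
      have "s < 1 / lam" using s1' unfolding s0_def by linarith
      then have "lam * s < 1" using lam0 by (simp add: field_simps)
      then show "ws s \<in> cball 0 1" unfolding ws_def using s0' lam0 ze
        by (simp add: norm_mult cmod_1m_eq del: of_real_mult)
    qed
    have c1: "cmod (\<psi> (zs s) - \<psi> \<xi>) < d / 3" using dl1 zsb by (simp add: dist_norm)
    have c2: "cmod (\<psi> (ws s) - \<psi> \<zeta>) < d / 3" using dl2 wsb by (simp add: dist_norm)
    have low: "d / 3 \<le> cmod (\<psi> (zs s) - \<psi> (ws s))"
    proof -
      have "\<psi> \<xi> - \<psi> \<zeta> = (\<psi> (zs s) - \<psi> (ws s)) - (\<psi> (zs s) - \<psi> \<xi>) + (\<psi> (ws s) - \<psi> \<zeta>)"
        by simp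
      then have "d = cmod ((\<psi> (zs s) - \<psi> (ws s)) - (\<psi> (zs s) - \<psi> \<xi>) + (\<psi> (ws s) - \<psi> \<zeta>))"
        unfolding d_def by simp
      also have "\<dots> \<le> cmod ((\<psi> (zs s) - \<psi> (ws s)) - (\<psi> (zs s) - \<psi> \<xi>)) + cmod (\<psi> (ws s) - \<psi> \<zeta>)"
        by (rule norm_triangle_ineq)
      also have "cmod ((\<psi> (zs s) - \<psi> (ws s)) - (\<psi> (zs s) - \<psi> \<xi>)) \<le> cmod (\<psi> (zs s) - \<psi> (ws s)) + cmod (\<psi> (zs s) - \<psi> \<xi>)"
        by (rule norm_triangle_ineq4)
      finally have "d \<le> cmod (\<psi> (zs s) - \<psi> (ws s)) + cmod (\<psi> (zs s) - \<psi> \<xi>) + cmod (\<psi> (ws s) - \<psi> \<zeta>)"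
        by simp
      then show ?thesis using c1 c2 by linarith
    qed
    from est[OF s0' s1'] have E: "cmod (\<psi> (zs s) - \<psi> (ws s)) * cmod (g (zs s)) \<le> K0"
      and G: "- ln (2 * \<gamma>1 * s) \<le> cmod (g (zs s))" by auto
    have "3*K0/d + 1 \<le> - ln (2 * \<gamma>1 * s)"
    proof -
      have "ln (2 * \<gamma>1 * s) \<le> ln (exp (-(3*K0/d + 1)))"
        using s4' g1 s0' by (subst ln_le_cancel_iff) auto
      then show ?thesis by simp
    qed
    with G have G2: "3*K0/d + 1 \<le> cmod (g (zs s))" by linarith
    have "(d / 3) * (3*K0/d + 1) \<le> cmod (\<psi> (zs s) - \<psi> (ws s)) * cmod (g (zs s))"
      using low G2 d0 K00 by (intro mult_mono) auto
    also have "(d / 3) * (3*K0/d + 1) = K0 + d / 3" using d0 by (simp add: field_simps)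
    finally show False using E d0 by linarith
  qed
qed

end
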